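(* Let $A$ be an invertible upper-triangular real $d\times d$ matrix and $\Sigma$ a real diagonal $d\times d$ matrix. Then $${\rm Low}(A\otimes A^{-T})(1\otimes\Sigma-\Sigma\otimes1)(A^{-1}\otimes A^T){\rm Low}={\rm Low}(A\otimes A^{-T}){\rm Low}(1\otimes\Sigma-\Sigma\otimes1){\rm Low}(A^{-1}\otimes A^T){\rm Low}.$$
   Context: $\otimes$ is the Kronecker product, $1$ the identity, $A^{-T}=(A^{-1})^T$. ${\rm Low}\in\{0,1\}^{d^2\times d^2}$ is the diagonal matrix such that ${\rm Low}\,{\rm vec}(B)={\rm vec}({\rm low}(B))$ for all $B$, where ${\rm vec}$ is column-wise vectorization and ${\rm low}(B)$ is the strictly lower-triangular part of $B$. *)

theory Defs
  imports "HOL-Analysis.Analysis"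
begin

text \<open>Indices of d\<times>d^2 objects: a finite, linearly (well-)ordered index type 'n with d = CARD('n).
  Vectors of length d^2 are indexed by pairs (j, i) in lexicographic-block order: the outer
  component is the block index, the inner one the position inside the block.\<close>

text \<open>Column-wise vectorization: vec(B) at (j, i) is the entry B_{i j} (column j, row i).\<close>
definition vecc :: "('a::zero)^'n^'m \<Rightarrow> 'a^('n \<times> 'm)" where
  "vecc B = (\<chi> p. B $ snd p $ fst p)"

text \<open>Kronecker product: (A \<otimes> B)_{(i,k),(j,l)} = A_{ij} B_{kl}; this matches
  vec(B X A^T) = (A \<otimes> B) vec(X).\<close>
definition kron :: "real^'n^'n \<Rightarrow> real^'m^'m \<Rightarrow> real^('n \<times> 'm)^('n \<times> 'm)" where
  "kron A B = (\<chi> p q. A $ fst p $ fst q * B $ snd p $ snd q)"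

definition low :: "real^('n::{finite,linorder})^('n::{finite,linorder}) \<Rightarrow> real^('n::{finite,linorder})^('n::{finite,linorder})" where
  "low B = (\<chi> i j. if j < i then B $ i $ j else 0)"

definition Low :: "real^('n::{finite,linorder} \<times> 'n)^('n \<times> 'n)" where
  "Low = (\<chi> p q. if p = q \<and> fst p < snd p then 1 else 0)"

lemma Low_vecc: "Low *v vecc B = vecc (low B)"
proof -
  have "(\<Sum>q\<in>UNIV. (if p = q \<and> fst p < snd p then 1 else 0) * B $ snd q $ fst q)
        = (if fst p < snd p then B $ snd p $ fst p else 0)" for p :: "'a::{finite,linorder} \<times> 'a"
    by (auto simp: if_distrib[of "\<lambda>c. c * _"] sum.delta cong: if_cong)
  then show ?thesis
    by (simp add: vec_eq_iff matrix_vector_mult_def Low_def vecc_def low_def)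
qed

definition upper_triangular :: "real^('n::{finite,linorder})^('n::{finite,linorder}) \<Rightarrow> bool" where
  "upper_triangular A \<longleftrightarrow> (\<forall>i j. j < i \<longrightarrow> A $ i $ j = 0)"

definition diagonal_mat :: "real^'n^'n \<Rightarrow> bool" where
  "diagonal_mat S \<longleftrightarrow> (\<forall>i j. i \<noteq> j \<longrightarrow> S $ i $ j = 0)"

end

theory Submission
  imports Defs
begin

lemma perm_ge_id:
  fixes p :: "'n::{finite,linorder} \<Rightarrow> 'n"
  assumes p: "p permutes UNIV" and ge: "\<forall>i. p i \<ge> i"
  shows "p = id"
proof (rule ccontr)
  assume ne: "p \<noteq> id"
  let ?E = "{i. p i \<noteq> i}"
  have En: "?E \<noteq> {}" using ne by auto
  define m where "m = Max ?E"
  have mE: "m \<in> ?E" using En unfolding m_def by (intro Max_in) auto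
  have gt: "p m > m" proof -
    have "m \<le> p m" using ge by blast
    moreover have "p m \<noteq> m" using mE by simp
    ultimately show ?thesis by (simp add: order_less_le)
  qed
  have "p m \<notin> ?E"
  proof
    assume "p m \<in> ?E"
    then have "p m \<le> m" unfolding m_def by (intro Max_ge) auto
    with gt show False by simp
  qed
  then have "p (p m) = p m" by simp
  then have "p m = m" using permutes_inj[OF p] by (meson injD)
  with mE show False by simp
qed

lemma det_upper_lin:
  fixes A :: "real^'n::{finite,linorder}^'n::{finite,linorder}"
  assumes ld: "\<And>i j. i > j \<Longrightarrow> A$i$j = 0"
  shows "det A = prod (\<lambda>i. A$i$i) (UNIV:: 'n set)"
proof -
  let ?U = "UNIV:: 'n set"
  let ?PU = "{p. p permutes ?U}"
  let ?pp = "(\<lambda>p. of_int (sign p) * prod (\<lambda>i. A$i$p i) (UNIV :: 'n set))"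
  have fU: "finite ?U"
    by simp
  have id0: "{id} \<subseteq> ?PU"
    by (auto simp: permutes_id)
  have p0: "\<forall>p \<in> ?PU -{id}. ?pp p = 0"
  proof
    fix p
    assume p: "p \<in> ?PU - {id}"
    then obtain i where i: "p i < i"
      using perm_ge_id[of p] by (metis DiffE mem_Collect_eq not_le singletonI)
    from ld[OF i] have "\<exists>i \<in> ?U. A$i$p i = 0"
      by blast
    with prod_zero[OF fU]  show "?pp p = 0"
      by force
  qed
  from sum.mono_neutral_cong_left[OF finite_permutations[OF fU] id0 p0] show ?thesis
    unfolding det_def by (simp add: sign_id)
qed

lemma inv_upper:
  fixes A :: "real^'n::{finite,linorder}^'n::{finite,linorder}"
  assumes inv: "invertible A" and up: "upper_triangular A" and ce: "e < c"
  shows "matrix_inv A $ c $ e = 0"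
proof (rule ccontr)
  let ?B = "matrix_inv A"
  assume nz: "?B $ c $ e \<noteq> 0"
  have BA: "?B ** A = mat 1" using inv unfolding invertible_def matrix_inv_def by (rule someI_ex[THEN conjunct2])
  have diag: "A $ k $ k \<noteq> 0" for k
  proof -
    have "det A \<noteq> 0" using inv invertible_det_nz by blast
    moreover have "det A = prod (\<lambda>i. A$i$i) UNIV"
      using up by (intro det_upper_lin) (auto simp: upper_triangular_def)
    ultimately show ?thesis by auto
  qed
  let ?E = "{k. k < c \<and> ?B $ c $ k \<noteq> 0}"
  have En: "?E \<noteq> {}" using nz ce by auto
  define m where "m = Min ?E"
  have mE: "m \<in> ?E" using En unfolding m_def by (intro Min_in) auto
  have mmin: "?B $ c $ k = 0" if "k < m" for k
  proof (rule ccontr)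
    assume "?B $ c $ k \<noteq> 0"
    then have "k \<in> ?E" using that mE by auto
    then have "m \<le> k" unfolding m_def by (intro Min_le) auto
    with that show False by simp
  qed
  have "(?B ** A) $ c $ m = 0" using BA mE by (auto simp: mat_def)
  moreover have "(?B ** A) $ c $ m = (\<Sum>k\<in>UNIV. ?B $ c $ k * A $ k $ m)"
    by (simp add: matrix_matrix_mult_def)
  moreover have "(\<Sum>k\<in>UNIV. ?B $ c $ k * A $ k $ m) = ?B $ c $ m * A $ m $ m"
  proof -
    have "(\<Sum>k\<in>UNIV. ?B $ c $ k * A $ k $ m) = ?B $ c $ m * A $ m $ m + (\<Sum>k\<in>UNIV-{m}. ?B $ c $ k * A $ k $ m)"
      by (simp add: sum.remove)
    moreover have "(\<Sum>k\<in>UNIV-{m}. ?B $ c $ k * A $ k $ m) = 0"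
    proof (rule sum.neutral, rule ballI)
      fix k assume "k \<in> UNIV - {m}"
      then have "k < m \<or> m < k" by auto
      then show "?B $ c $ k * A $ k $ m = 0"
        using mmin up by (auto simp: upper_triangular_def)
    qed
    ultimately show ?thesis by simp
  qed
  ultimately show False using mE diag[of m] by simp
qed


definition dg :: "('a \<Rightarrow> real) \<Rightarrow> real^'a^'a" where
  "dg f = (\<chi> p q. if p = q then f p else 0)"

lemma dg_left: "dg f ** X = (\<chi> p q. f p * X$p$q)"
proof -
  have "(\<Sum>k\<in>UNIV. (if p = k then f p else 0) * X $ k $ q) = f p * X$p$q" for p q
    by (simp add: if_distrib[of "\<lambda>c. c * _"] cong: if_cong)
  then show ?thesis by (simp add: vec_eq_iff matrix_matrix_mult_def dg_def)
qed

lemma dg_right: "X ** dg f = (\<chi> p q. X$p$q * f q)"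
proof -
  have "(\<Sum>k\<in>UNIV. X $ p $ k * (if k = q then f k else 0)) = X$p$q * f q" for p q
    by (simp add: if_distrib[of "\<lambda>c. _ * c"] cong: if_cong)
  then show ?thesis by (simp add: vec_eq_iff matrix_matrix_mult_def dg_def)
qed

lemma dg_dg: "dg f ** dg g = dg (\<lambda>p. f p * g p)"
  unfolding dg_left by (simp add: vec_eq_iff dg_def)

lemma Low_dg: "(Low :: real^('n::{finite,linorder} \<times> 'n)^('n \<times> 'n)) = dg (\<lambda>p. if fst p < snd p then 1 else 0)"
  by (simp add: Low_def dg_def vec_eq_iff)

lemma M_dg:
  fixes S :: "real^('n::{finite,linorder})^('n::{finite,linorder})"
  assumes "diagonal_mat S"
  shows "kron (mat 1) S - kron S (mat 1) = dg (\<lambda>p. S$snd p$snd p - S$fst p$fst p)"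
  using assms unfolding diagonal_mat_def
  by (auto simp: kron_def dg_def vec_eq_iff mat_def prod_eq_iff)

theorem lemma7:
  fixes A S :: "real^('n::{finite,linorder})^('n::{finite,linorder})"
  assumes "invertible A" and "upper_triangular A" and "diagonal_mat S"
  shows "Low ** kron A (transpose (matrix_inv A))
           ** (kron (mat 1) S - kron S (mat 1))
           ** kron (matrix_inv A) (transpose A) ** Low
       = Low ** kron A (transpose (matrix_inv A)) ** Low
           ** (kron (mat 1) S - kron S (mat 1)) ** Low
           ** kron (matrix_inv A) (transpose A) ** Low"
proof -
  define l :: "'n \<times> 'n \<Rightarrow> real" where "l = (\<lambda>p. if fst p < snd p then 1 else 0)"
  define m where "m = (\<lambda>p::'n\<times>'n. S$snd p$snd p - S$fst p$fst p)"
  define K1 where "K1 = kron A (transpose (matrix_inv A))"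
  define K2 where "K2 = kron (matrix_inv A) (transpose A)"
  have L: "Low = dg l" unfolding l_def by (rule Low_dg)
  have M: "kron (mat 1) S - kron S (mat 1) = dg m" unfolding m_def by (rule M_dg[OF assms(3)])
  have key: "dg m ** K2 ** dg l = dg (\<lambda>p. l p * m p) ** K2 ** dg l"
  proof -
    have "m p * K2 $ p $ q * l q = l p * m p * K2 $ p $ q * l q" for p q
    proof -
      obtain c d where p: "p = (c, d)" by force
      obtain e f where q: "q = (e, f)" by force
      show ?thesis
      proof (cases "l q = 0 \<or> l p = 1")
        case True then show ?thesis by auto
      next
        case False
        then have ef: "e < f" and dc: "d \<le> c" using p q unfolding l_def by (auto split: if_splits)
        show ?thesis
        proof (cases "d = c")
          case True then show ?thesis using p by (simp add: m_def)
        next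
          case False
          with dc have dc: "d < c" by simp
          have "K2 $ p $ q = matrix_inv A $ c $ e * A $ f $ d"
            using p q by (simp add: K2_def kron_def transpose_def)
          moreover have "matrix_inv A $ c $ e * A $ f $ d = 0"
          proof (cases "f \<le> d")
            case True
            then have "e < c" using ef dc by simp
            then show ?thesis using inv_upper[OF assms(1,2)] by simp
          next
            case False
            then show ?thesis using assms(2) by (simp add: upper_triangular_def)
          qed
          ultimately show ?thesis by simp
        qed
      qed
    qed
    then show ?thesis by (simp add: dg_left dg_right vec_eq_iff mult.assoc)
  qed
  have ll: "dg l ** dg m ** dg l = dg (\<lambda>p. l p * m p)"
    unfolding dg_dg by (rule arg_cong[where f=dg]) (auto simp: l_def)
  have "Low ** K1 ** Low ** dg m ** Low ** K2 ** Low
      = Low ** K1 ** (dg l ** dg m ** dg l) ** K2 ** Low"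
    by (simp add: L matrix_mul_assoc)
  also have "\<dots> = Low ** K1 ** (dg (\<lambda>p. l p * m p) ** K2 ** dg l)"
    by (simp add: ll L matrix_mul_assoc)
  also have "\<dots> = Low ** K1 ** (dg m ** K2 ** dg l)"
    by (simp add: key)
  also have "\<dots> = Low ** K1 ** dg m ** K2 ** Low"
    by (simp add: L matrix_mul_assoc)
  finally show ?thesis by (simp add: M K1_def K2_def)
qed

end
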